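(* Let $n$ be a positive integer. There exists a form $F\in\mathbb{Z}[x_1,\ldots,x_n]$ (a polynomial $F\in\mathbb{Z}[x]$ if $n=1$), a prime number $p$, and $M>0$ such that $R(F)$ is dense in $\mathbb{Q}_p$, but $R(F)$ is not dense in $\mathbb{Q}_q$ for every prime $q>M$.
   Context: For $F\in\mathbb{Z}[x_1,\dots,x_n]$, $R(F)=\{F(\overline{x})/F(\overline{y}) : \overline{x},\overline{y}\in\mathbb{Z}^n,\ F(\overline{y})\neq 0\}$, and density is with respect to the $p$-adic (resp. $q$-adic) topology. *)

theory Defs
  imports Complex_Main "HOL-Library.Poly_Mapping" "HOL-Computational_Algebra.Primes"
begin

text \<open>Multivariate integer polynomials: a finitely supported map from monomials
  (finitely supported exponent vectors, variables indexed by nat) to integer coefficients.\<close>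
type_synonym int_mpoly = "(nat \<Rightarrow>\<^sub>0 nat) \<Rightarrow>\<^sub>0 int"

definition mpoly_eval :: "int_mpoly \<Rightarrow> (nat \<Rightarrow> int) \<Rightarrow> int" where
  "mpoly_eval F x = sum (\<lambda>m. Poly_Mapping.lookup F m * prod (\<lambda>i. x i ^ Poly_Mapping.lookup m i) (Poly_Mapping.keys m)) (Poly_Mapping.keys F)"

definition vars_below :: "nat \<Rightarrow> int_mpoly \<Rightarrow> bool" where
  "vars_below n F \<longleftrightarrow> (\<forall>m\<in>Poly_Mapping.keys F. Poly_Mapping.keys m \<subseteq> {..<n})"

definition total_degree_mon :: "(nat \<Rightarrow>\<^sub>0 nat) \<Rightarrow> nat" where
  "total_degree_mon m = (\<Sum>i\<in>Poly_Mapping.keys m. Poly_Mapping.lookup m i)"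

definition is_form :: "int_mpoly \<Rightarrow> bool" where
  "is_form F \<longleftrightarrow> (\<exists>d. \<forall>m\<in>Poly_Mapping.keys F. total_degree_mon m = d)"

text \<open>Integer points of Z^n: functions vanishing outside {..<n}.\<close>
definition int_points :: "nat \<Rightarrow> (nat \<Rightarrow> int) set" where
  "int_points n = {x. \<forall>i\<ge>n. x i = 0}"

definition ratio_set :: "nat \<Rightarrow> int_mpoly \<Rightarrow> rat set" where
  "ratio_set n F = {of_int (mpoly_eval F x) / of_int (mpoly_eval F y) | x y.
      x \<in> int_points n \<and> y \<in> int_points n \<and> mpoly_eval F y \<noteq> 0}"

definition padic_val_rat :: "nat \<Rightarrow> rat \<Rightarrow> int" where
  "padic_val_rat p r =
     (of_nat (multiplicity (int p) (fst (quotient_of r))) :: int)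
     - of_nat (multiplicity (int p) (snd (quotient_of r)))"

definition padic_abs :: "nat \<Rightarrow> rat \<Rightarrow> real" where
  "padic_abs p r = (if r = 0 then 0 else real p powr (- real_of_int (padic_val_rat p r)))"

text \<open>S \<subseteq> Q is dense in Q_p iff it is dense in Q for the p-adic metric (Q is dense in Q_p).\<close>
definition padic_dense :: "nat \<Rightarrow> rat set \<Rightarrow> bool" where
  "padic_dense p S \<longleftrightarrow> (\<forall>a::rat. \<forall>\<epsilon>>0. \<exists>s\<in>S. padic_abs p (s - a) < \<epsilon>)"

end

theory Submission
  imports Defs "HOL-Number_Theory.Cong"
begin


definition mono :: "(nat \<Rightarrow>\<^sub>0 nat) \<Rightarrow> (nat \<Rightarrow> int) \<Rightarrow> int" where
  "mono m x = (\<Prod>i\<in>Poly_Mapping.keys m. x i ^ Poly_Mapping.lookup m i)"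

lemma mono_superset:
  assumes "finite S" "Poly_Mapping.keys m \<subseteq> S"
  shows "mono m x = (\<Prod>i\<in>S. x i ^ Poly_Mapping.lookup m i)"
  unfolding mono_def
  by (rule prod.mono_neutral_left) (use assms in \<open>auto simp: in_keys_iff\<close>)

lemma mono_add: "mono (m1 + m2) x = mono m1 x * mono m2 x"
proof -
  let ?S = "Poly_Mapping.keys m1 \<union> Poly_Mapping.keys m2"
  have f: "finite ?S" by simp
  have "mono (m1 + m2) x = (\<Prod>i\<in>?S. x i ^ Poly_Mapping.lookup (m1 + m2) i)"
    using mono_superset[OF f keys_add[of m1 m2]] .
  also have "\<dots> = (\<Prod>i\<in>?S. x i ^ Poly_Mapping.lookup m1 i) * (\<Prod>i\<in>?S. x i ^ Poly_Mapping.lookup m2 i)"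
    by (simp add: lookup_add power_add prod.distrib)
  also have "\<dots> = mono m1 x * mono m2 x"
    by (subst (1 2) mono_superset[OF f]) auto
  finally show ?thesis .
qed

lemma mono_zero: "mono 0 x = 1" by (simp add: mono_def)

lemma eval_superset:
  assumes "finite S" "Poly_Mapping.keys F \<subseteq> S"
  shows "mpoly_eval F x = (\<Sum>m\<in>S. Poly_Mapping.lookup F m * mono m x)"
  unfolding mpoly_eval_def mono_def[symmetric]
  by (rule sum.mono_neutral_left) (use assms in \<open>auto simp: in_keys_iff\<close>)

lemma eval_add: "mpoly_eval (F + G) x = mpoly_eval F x + mpoly_eval G x"
proof -
  let ?S = "Poly_Mapping.keys F \<union> Poly_Mapping.keys G"
  have f: "finite ?S" by simp
  show ?thesis
    apply (subst (1 2 3) eval_superset[OF f])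
    using keys_add[of F G] by (auto simp: lookup_add distrib_right sum.distrib)
qed

lemma eval_zero: "mpoly_eval 0 x = 0" by (simp add: mpoly_eval_def)

lemma eval_single: "mpoly_eval (Poly_Mapping.single m a) x = a * mono m x"
  by (simp add: mpoly_eval_def mono_def)

lemma eval_sum: "mpoly_eval (sum f A) x = (\<Sum>a\<in>A. mpoly_eval (f a) x)"
  by (induction A rule: infinite_finite_induct) (auto simp: eval_zero eval_add)

lemma decomp: "F = (\<Sum>m\<in>Poly_Mapping.keys F. Poly_Mapping.single m (Poly_Mapping.lookup F m))"
  by (rule poly_mapping_eqI) (auto simp: lookup_sum lookup_single when_def in_keys_iff)

lemma eval_mult: "mpoly_eval (F * G) x = mpoly_eval F x * mpoly_eval G x"
proof -
  have "F * G = (\<Sum>m\<in>Poly_Mapping.keys F. \<Sum>m'\<in>Poly_Mapping.keys G.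
          Poly_Mapping.single m (Poly_Mapping.lookup F m) * Poly_Mapping.single m' (Poly_Mapping.lookup G m'))"
    by (subst decomp[of F], subst decomp[of G]) (simp add: sum_product)
  then have "mpoly_eval (F * G) x = (\<Sum>m\<in>Poly_Mapping.keys F. \<Sum>m'\<in>Poly_Mapping.keys G.
          Poly_Mapping.lookup F m * Poly_Mapping.lookup G m' * mono (m + m') x)"
    by (simp add: eval_sum mult_single eval_single)
  also have "\<dots> = (\<Sum>m\<in>Poly_Mapping.keys F. Poly_Mapping.lookup F m * mono m x) *
                  (\<Sum>m'\<in>Poly_Mapping.keys G. Poly_Mapping.lookup G m' * mono m' x)"
    by (simp add: sum_product mono_add mult_ac)
  finally show ?thesis by (simp add: mpoly_eval_def mono_def)
qed

lemma eval_one: "mpoly_eval 1 x = 1"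
  by (metis eval_single mono_zero mult_1 single_one)

lemma eval_uminus: "mpoly_eval (- F) x = - mpoly_eval F x"
  using eval_add[of F "-F" x] by (simp add: eval_zero)

lemma eval_diff: "mpoly_eval (F - G) x = mpoly_eval F x - mpoly_eval G x"
  using eval_add[of F "-G" x] by (simp add: eval_uminus)

lemma eval_power: "mpoly_eval (F ^ k) x = mpoly_eval F x ^ k"
  by (induction k) (auto simp: eval_one eval_mult)

lemma eval_numeral: "mpoly_eval (numeral k) x = numeral k"
  by (metis eval_single mono_zero mult.right_neutral single_numeral)

definition Xv :: "nat \<Rightarrow> int_mpoly" where
  "Xv i = Poly_Mapping.single (Poly_Mapping.single i 1) 1"

lemma eval_Xv: "mpoly_eval (Xv i) x = x i"
  by (simp add: Xv_def eval_single mono_def)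

lemmas eval_simps = eval_add eval_mult eval_one eval_uminus eval_diff eval_power eval_numeral eval_Xv eval_zero



definition Eint :: "int \<Rightarrow> int \<Rightarrow> int" where
  "Eint u w = u^35 * (u-w)^15 * (u-2*w)^21 * (u-3*w)^84 * (u-4*w)^90 * w^70"

definition good :: "nat \<Rightarrow> bool" where
  "good a \<longleftrightarrow> (3 dvd a \<and> 5 dvd a) \<or> (3 dvd a \<and> 7 dvd a) \<or> (5 dvd a \<and> 7 dvd a)"

lemma good_not_succ: "good a \<Longrightarrow> good b \<Longrightarrow> a \<noteq> b + 1"
proof
  assume g: "good a" "good b" and ab: "a = b + 1"
  have "\<not> (r dvd a \<and> r dvd b)" if "r > (1::nat)" for r
    using that ab by (metis dvd_add_right_iff nat_dvd_1_iff_1 less_irrefl)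
  from this[of 3] this[of 5] this[of 7] g show False unfolding good_def by auto
qed

lemma good35: "good (35 * k)"
proof -
  have "35 * k = 5 * (7 * k)" "35 * k = 7 * (5 * k)" by simp_all
  then show ?thesis unfolding good_def by (metis dvd_triv_left)
qed

lemma good15: "good (15 * k)"
proof -
  have "15 * k = 5 * (3 * k)" "15 * k = 3 * (5 * k)" by simp_all
  then show ?thesis unfolding good_def by (metis dvd_triv_left)
qed

lemma good21: "good (21 * k)"
proof -
  have "21 * k = 3 * (7 * k)" "21 * k = 7 * (3 * k)" by simp_all
  then show ?thesis unfolding good_def by (metis dvd_triv_left)
qed

lemma coprime_small:
  fixes q :: nat and d :: int
  assumes "prime q" "q > 4" "d \<noteq> 0" "\<bar>d\<bar> \<le> 4"
  shows "coprime ((int q)^k) d"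
proof -
  have "\<not> int q dvd d"
  proof
    assume "int q dvd d"
    then have "\<bar>int q\<bar> \<le> \<bar>d\<bar>" using assms(3) dvd_imp_le_int by blast
    with assms show False by simp
  qed
  moreover have "prime (int q)" using assms(1) by simp
  ultimately have "coprime (int q) d" using prime_imp_coprime by blast
  then show ?thesis by simp
qed

lemma pair_lemma:
  fixes q :: nat and u w :: int
  defines "L \<equiv> (\<lambda>i::nat. if i < 5 then u - int i * w else w)"
  assumes q: "prime q" "q > 4" and ij: "i < 6" "j < 6" "i \<noteq> j"
    and d: "(int q)^k dvd L i" "(int q)^k dvd L j" and l: "l < 6"
  shows "(int q)^k dvd L l"
proof -
  let ?Q = "(int q)^k"
  have w: "?Q dvd w"
  proof (cases "i < 5 \<and> j < 5")
    case True
    have "L i - L j = (int j - int i) * w" using True by (simp add: L_def algebra_simps)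
    then have "?Q dvd (int j - int i) * w" using d by (metis dvd_diff)
    moreover have "coprime ?Q (int j - int i)"
      using True ij by (intro coprime_small[OF q]) auto
    ultimately show ?thesis using coprime_dvd_mult_right_iff by blast
  next
    case False
    then have "i = 5 \<or> j = 5" using ij by auto
    then show ?thesis using d by (auto simp: L_def)
  qed
  have u: "?Q dvd u"
  proof (cases "i < 5")
    case True
    have "u = L i + int i * w" using True by (simp add: L_def)
    then show ?thesis using d w by simp
  next
    case False
    then have "j < 5" using ij by auto
    have "u = L j + int j * w" using \<open>j < 5\<close> by (simp add: L_def)
    then show ?thesis using d w by simp
  qed
  show ?thesis using u w by (auto simp: L_def)
qed

lemma qgood:
  fixes q :: nat and u w :: int
  assumes q: "prime q" "q > 4" and E: "Eint u w \<noteq> 0"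
  shows "good (multiplicity (int q) (Eint u w))"
proof -
  define L where "L \<equiv> (\<lambda>i::nat. if i < 5 then u - int i * w else w)"
  define v where "v \<equiv> (\<lambda>i. multiplicity (int q) (L i))"
  have pq: "prime_elem (int q)" using q by simp
  have Eeq: "Eint u w = L 0 ^35 * L 1 ^15 * L 2 ^21 * L 3 ^84 * L 4 ^90 * L 5 ^70"
    by (simp add: Eint_def L_def)
  have nz: "L i \<noteq> 0" if "i < 6" for i
  proof -
    have "i = 0 \<or> i = 1 \<or> i = 2 \<or> i = 3 \<or> i = 4 \<or> i = 5" using that by auto
    then show ?thesis using E unfolding Eeq by auto
  qed
  have mE: "multiplicity (int q) (Eint u w) = 35 * v 0 + 15 * v 1 + 21 * v 2 + 84 * v 3 + 90 * v 4 + 70 * v 5"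
    unfolding Eeq v_def using nz[of 0] nz[of 1] nz[of 2] nz[of 3] nz[of 4] nz[of 5]
    by (simp add: prime_elem_multiplicity_mult_distrib[OF pq] prime_elem_multiplicity_power_distrib[OF pq])
  have nu: "\<not> is_unit (int q)" using q by auto
  have pd: "((int q)^n dvd L i) = (n \<le> v i)" if "i < 6" for n i
    unfolding v_def using power_dvd_iff_le_multiplicity[OF nz[OF that] nu] .
  define c where "c = Min (v ` {..<6})"
  have "c \<in> v ` {..<6}" unfolding c_def by (rule Min_in) (auto simp: lessThan_empty_iff)
  then obtain i0 where i0: "i0 < 6" "v i0 = c" by auto
  have ge: "v i \<ge> c" if "i < 6" for i using that unfolding c_def by auto
  have dv: "(int q)^c dvd L i" if "i < 6" for i
    using ge[OF that] pd[OF that] by simp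
  have atmost: False if "j < 6" "l < 6" "j \<noteq> l" "v j > c" "v l > c" for j l
  proof -
    have "(int q)^(Suc c) dvd L j" "(int q)^(Suc c) dvd L l"
      using that pd[of j "Suc c"] pd[of l "Suc c"] by (auto simp del: power_Suc)
    then have "(int q)^(Suc c) dvd L i0"
      using pair_lemma[OF q, where u=u and w=w and i=j and j=l and k="Suc c" and l=i0] that i0 unfolding L_def by auto
    then have "v i0 \<ge> Suc c" using pd[OF i0(1), of "Suc c"] by (simp del: power_Suc)
    with i0 show False by simp
  qed
  obtain j where j: "j < 6" "\<forall>i<6. i \<noteq> j \<longrightarrow> v i = c"
  proof (cases "\<exists>j<6. v j > c")
    case True
    then obtain j where "j < 6" "v j > c" by auto
    then show ?thesis using that[of j] atmost ge by (metis le_neq_implies_less)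
  next
    case False
    then show ?thesis using that[of 0] ge by (metis le_neq_implies_less zero_less_numeral)
  qed
  have "j = 0 \<or> j = 1 \<or> j = 2 \<or> j = 3 \<or> j = 4 \<or> j = 5" using j by auto
  then show ?thesis
  proof (elim disjE)
    assume "j = 0" then have "v 1 = c" "v 2 = c" "v 3 = c" "v 4 = c" "v 5 = c" using j by auto
    then have "multiplicity (int q) (Eint u w) = 35 * (v 0 + 8 * c)" unfolding mE by simp
    then show ?thesis by (metis good35)
  next
    assume "j = 1" then have "v 0 = c" "v 2 = c" "v 3 = c" "v 4 = c" "v 5 = c" using j by auto
    then have "multiplicity (int q) (Eint u w) = 15 * (v 1 + 20 * c)" unfolding mE by simp
    then show ?thesis by (metis good15)
  next
    assume "j = 2" then have "v 1 = c" "v 0 = c" "v 3 = c" "v 4 = c" "v 5 = c" using j by auto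
    then have "multiplicity (int q) (Eint u w) = 21 * (v 2 + 14 * c)" unfolding mE by simp
    then show ?thesis by (metis good21)
  next
    assume "j = 3" then have "v 1 = c" "v 2 = c" "v 0 = c" "v 4 = c" "v 5 = c" using j by auto
    then have "multiplicity (int q) (Eint u w) = 21 * (4 * v 3 + 11 * c)" unfolding mE by simp
    then show ?thesis by (metis good21)
  next
    assume "j = 4" then have "v 1 = c" "v 2 = c" "v 3 = c" "v 0 = c" "v 5 = c" using j by auto
    then have "multiplicity (int q) (Eint u w) = 15 * (6 * v 4 + 15 * c)" unfolding mE by simp
    then show ?thesis by (metis good15)
  next
    assume "j = 5" then have "v 1 = c" "v 2 = c" "v 3 = c" "v 4 = c" "v 0 = c" using j by auto
    then have "multiplicity (int q) (Eint u w) = 35 * (2 * v 5 + 7 * c)" unfolding mE by simp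
    then show ?thesis by (metis good35)
  qed
qed



lemma val_div:
  fixes p :: nat and A B :: int
  assumes p: "prime p" and A: "A \<noteq> 0" and B: "B \<noteq> 0"
  shows "padic_val_rat p (of_int A / of_int B) = int (multiplicity (int p) A) - int (multiplicity (int p) B)"
proof -
  obtain a b where ab: "quotient_of (of_int A / of_int B) = (a, b)" by (cases "quotient_of (of_int A / of_int B)")
  have b: "b > 0" using quotient_of_denom_pos[OF ab] .
  have r: "(of_int A / of_int B :: rat) = of_int a / of_int b" using quotient_of_div[OF ab] .
  then have "of_int (A * b) = (of_int (a * B) :: rat)" using B b by (simp add: field_simps)
  then have eq: "A * b = a * B" by (simp only: of_int_eq_iff)
  have a: "a \<noteq> 0" using eq A b by auto
  have pe: "prime_elem (int p)" using p by simp
  have "multiplicity (int p) (A * b) = multiplicity (int p) (a * B)" using eq by simp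
  then have "multiplicity (int p) A + multiplicity (int p) b = multiplicity (int p) a + multiplicity (int p) B"
    using A B a b by (simp add: prime_elem_multiplicity_mult_distrib[OF pe])
  then show ?thesis unfolding padic_val_rat_def ab by simp
qed

lemma abs_eq:
  assumes "r \<noteq> 0"
  shows "padic_abs p r = real p powr (- real_of_int (padic_val_rat p r))"
  using assms by (simp add: padic_abs_def)

lemma abs_bound:
  fixes p k :: nat and A B :: int
  assumes p: "prime p" and B: "B \<noteq> 0" and d: "(int p)^k dvd A"
  shows "padic_abs p (of_int A / of_int B) \<le> real p powr (- (real k - real (multiplicity (int p) B)))"
proof (cases "A = 0")
  case True then show ?thesis by (simp add: padic_abs_def)
next
  case False
  have nu: "\<not> is_unit (int p)" using p by auto
  have "k \<le> multiplicity (int p) A"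
    using power_dvd_iff_le_multiplicity[OF False nu] d by simp
  moreover have "p > 1" using p prime_gt_1_nat by blast
  ultimately show ?thesis using False B
    by (simp add: padic_abs_def val_div[OF p False B])
qed

lemma qdistinct:
  fixes q :: nat and X Y :: int
  assumes q: "prime q" and Y: "Y \<noteq> 0"
    and nv: "\<not> (X \<noteq> 0 \<and> multiplicity (int q) X = multiplicity (int q) Y + 1)"
  shows "\<not> padic_abs q (of_int X / of_int Y - of_int (int q)) < 1 / real q"
proof -
  let ?Q = "int q"
  let ?mY = "multiplicity ?Q Y"
  have pe: "prime_elem ?Q" using q by simp
  have nu: "\<not> is_unit ?Q" using q by auto
  have q1: "q > 1" using q prime_gt_1_nat by blast
  define D where "D = X - ?Q * Y"
  have eqr: "(of_int X / of_int Y - of_int (int q) :: rat) = of_int D / of_int Y"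
    using Y by (simp add: D_def field_simps)
  have mqY: "multiplicity ?Q (?Q * Y) = ?mY + 1"
    using Y q by (simp add: prime_elem_multiplicity_mult_distrib[OF pe])
  have D0: "D \<noteq> 0"
  proof
    assume "D = 0"
    then have "X = ?Q * Y" by (simp add: D_def)
    then show False using nv mqY Y q1 by simp
  qed
  have mD: "multiplicity ?Q D \<le> ?mY + 1"
  proof (cases "X = 0")
    case True
    then have "D = - (?Q * Y)" by (simp add: D_def)
    have "multiplicity ?Q (-(?Q*Y)) = multiplicity ?Q (normalize (-(?Q*Y)))"
      by (rule multiplicity_normalize_right[symmetric])
    also have "\<dots> = multiplicity ?Q (normalize (?Q*Y))" by simp
    also have "\<dots> = multiplicity ?Q (?Q*Y)" by (rule multiplicity_normalize_right)
    finally show ?thesis using mqY \<open>D = - (?Q * Y)\<close> by simp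
  next
    case X: False
    let ?mX = "multiplicity ?Q X"
    have "?mX \<noteq> ?mY + 1" using nv X by auto
    then consider "?mX \<ge> ?mY + 2" | "?mX \<le> ?mY" by linarith
    then show ?thesis
    proof cases
      case 1
      have "\<not> ?Q ^ (?mY + 2) dvd D"
      proof
        assume h: "?Q ^ (?mY + 2) dvd D"
        have "?Q ^ (?mY + 2) dvd X" using 1 multiplicity_dvd' by blast
        moreover have "?Q * Y = X - D" by (simp add: D_def)
        ultimately have "?Q ^ (?mY + 2) dvd ?Q * Y" using h by (simp add: dvd_diff)
        moreover have "?Q * Y \<noteq> 0" using Y q1 by simp
        ultimately have "?mY + 2 \<le> multiplicity ?Q (?Q * Y)"
          using power_dvd_iff_le_multiplicity[of "?Q * Y" ?Q "?mY + 2"] nu by blast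
        then have "?mY + 2 \<le> ?mY + 1" using mqY by simp
        then show False by simp
      qed
      then have "multiplicity ?Q D < ?mY + 2" by (rule multiplicity_lessI[OF D0 nu])
      then show ?thesis by simp
    next
      case 2
      have "\<not> ?Q ^ (?mX + 1) dvd D"
      proof
        assume h: "?Q ^ (?mX + 1) dvd D"
        have "?Q ^ (?mX + 1) dvd ?Q * Y"
          using 2 mqY multiplicity_dvd'[of "?mX + 1" ?Q "?Q * Y"] by simp
        moreover have "X = D + ?Q * Y" by (simp add: D_def)
        ultimately have "?Q ^ (?mX + 1) dvd X" using h by (simp add: dvd_add)
        then have "?mX + 1 \<le> ?mX" using power_dvd_iff_le_multiplicity[OF X nu, of "?mX + 1"] by blast
        then show False by simp
      qed
      then have "multiplicity ?Q D < ?mX + 1" by (rule multiplicity_lessI[OF D0 nu])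
      then show ?thesis using 2 by simp
    qed
  qed
  have "padic_abs q (of_int D / of_int Y) = real q powr (- real_of_int (padic_val_rat q (of_int D / of_int Y)))"
    using D0 Y by (simp add: padic_abs_def)
  also have "\<dots> = real q powr (- (real (multiplicity ?Q D) - real ?mY))"
    by (simp add: val_div[OF q D0 Y])
  also have "\<dots> \<ge> real q powr (-1)"
    using mD q1 by (intro powr_mono) auto
  finally show ?thesis unfolding eqr using q1 by (simp add: powr_minus_divide)
qed

lemma odd_pow2:
  fixes u :: int
  assumes "odd u"
  shows "(2::int)^(Suc j) dvd u^(2^j) - 1"
proof (induction j)
  case 0 then show ?case using assms by (simp add: odd_iff_mod_2_eq_one dvd_eq_mod_eq_0 mod_diff_eq[symmetric])
next
  case (Suc j)
  have e: "u^(2^Suc j) - 1 = (u^(2^j) - 1) * (u^(2^j) + 1)"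
    by (simp add: power_mult algebra_simps power2_eq_square)
  have "(2::int) dvd u^(2^j) + 1" using assms by simp
  then have "(2::int)^(Suc j) * 2 dvd (u^(2^j) - 1) * (u^(2^j) + 1)" using Suc mult_dvd_mono by blast
  then show ?case unfolding e by (simp add: mult.commute)
qed

lemma odd_pow2':
  fixes u :: int and N :: nat
  assumes "odd u" "N \<ge> 1"
  shows "(2::int)^N dvd u^(2^(N-1)) - 1"
  using odd_pow2[OF assms(1), of "N - 1"] assms(2) by simp

lemma pow_mult_cong:
  fixes u :: int
  assumes "(2::int)^N dvd u^M - 1"
  shows "(2::int)^N dvd u^(1 + j * M) - u"
proof -
  have "(2::int)^N dvd (u^M)^j - 1"
  proof (induction j)
    case 0 then show ?case by simp
  next
    case (Suc j)
    have eq: "(u^M)^(Suc j) - 1 = u^M * ((u^M)^j - 1) + (u^M - 1)" by (simp add: algebra_simps)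
    have a: "(2::int)^N dvd u^M * ((u^M)^j - 1)" using Suc.IH by (rule dvd_mult)
    show ?case by (subst eq) (rule dvd_add[OF a assms])
  qed
  then have "(2::int)^N dvd u * ((u^M)^j - 1)" by simp
  moreover have "u * ((u^M)^j - 1) = u^(1 + j * M) - u"
    by (simp add: power_mult power_add algebra_simps mult.commute)
  ultimately show ?thesis by simp
qed




lemma eroot:
  fixes e N :: nat and u :: int
  assumes e: "odd e" and u: "odd u"
  shows "\<exists>t. odd t \<and> (2::int)^N dvd t^e - u"
proof -
  have "(2::int)^(Suc N) dvd (int e)^(2^N) - 1" using odd_pow2[of "int e" N] e by simp
  then have "(2::int)^N dvd (int e)^(2^N) - 1" by (rule dvd_mult_left[where a="2^N" and b=2, unfolded power_Suc2[symmetric]])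
  then obtain c where c: "(int e)^(2^N) - 1 = 2^N * c" by (auto elim: dvdE)
  have "int e \<ge> 1" using e by (cases e) auto
  then have "(int e)^(2^N) \<ge> 1" by (rule one_le_power)
  then have "0 \<le> (2::int)^N * c" using c by simp
  then have c0: "c \<ge> 0" by (simp add: zero_le_mult_iff)
  have en: "e^(2^N) = 1 + nat c * 2^N"
  proof -
    have "int (e^(2^N)) = int (1 + nat c * 2^N)" using c c0 by (simp add: algebra_simps)
    then show ?thesis by (simp only: of_nat_eq_iff)
  qed
  define d where "d = e^(2^N - 1)"
  have s1: "Suc (2^N - 1) = (2::nat)^N" by simp
  have "d * e = e ^ Suc (2^N - 1)" unfolding d_def by (simp only: power_Suc2)
  then have de: "d * e = e^(2^N)" unfolding s1 .
  define t where "t = u^d"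
  have "odd t" unfolding t_def using u by simp
  moreover have "(2::int)^N dvd t^e - u"
  proof -
    have "t^e = u^(1 + nat c * 2^N)" unfolding t_def power_mult[symmetric] de en ..
    moreover have "(2::int)^N dvd u^(2^N) - 1"
      using odd_pow2[OF u, of N] by (rule dvd_mult_left[where a="2^N" and b=2, unfolded power_Suc2[symmetric]])
    ultimately show ?thesis using pow_mult_cong[of N u "2^N" "nat c"] by simp
  qed
  ultimately show ?thesis by blast
qed

lemma unit_solve:
  fixes e N :: nat and G0 Qo Po Yo :: int
  assumes e: "odd e" and o: "odd G0" "odd Qo" "odd Po" "odd Yo"
  shows "\<exists>t. odd t \<and> (\<forall>G. (2::int)^N dvd G - G0 \<longrightarrow> (2::int)^N dvd t^e * G * Qo - Po * Yo)"
proof -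
  define w where "w = G0 * Qo"
  have ow: "odd w" using o by (simp add: w_def)
  define wi where "wi = w^(2^N - 1)"
  have s1: "Suc (2^N - 1) = (2::nat)^N" by simp
  have "w * wi = w ^ Suc (2^N - 1)" unfolding wi_def by (simp only: power_Suc)
  then have wwi: "w * wi = w^(2^N)" unfolding s1 .
  have w1: "(2::int)^N dvd w * wi - 1"
    using odd_pow2[OF ow, of N] unfolding wwi by (rule dvd_mult_left[where a="2^N" and b=2, unfolded power_Suc2[symmetric]])
  define u where "u = Po * Yo * wi"
  have ou: "odd u" using o ow by (simp add: u_def wi_def)
  obtain t where t: "odd t" "(2::int)^N dvd t^e - u" using eroot[OF e ou] by blast
  have "(2::int)^N dvd t^e * G * Qo - Po * Yo" if G: "(2::int)^N dvd G - G0" for G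
  proof -
    have "t^e * G * Qo - Po * Yo = (t^e - u) * (G * Qo) + u * Qo * (G - G0) + Po * Yo * (w * wi - 1)"
      by (simp add: u_def w_def algebra_simps)
    moreover have "(2::int)^N dvd (t^e - u) * (G * Qo)" using t(2) by simp
    moreover have "(2::int)^N dvd u * Qo * (G - G0)" using G by simp
    moreover have "(2::int)^N dvd Po * Yo * (w * wi - 1)" using w1 by simp
    ultimately show ?thesis by (simp add: dvd_add)
  qed
  then show ?thesis using t(1) by blast
qed



lemma cong0: "(m::int) dvd x \<Longrightarrow> [c + x = c] (mod m)"
  by (simp add: cong_iff_dvd_diff)


definition GA :: "nat \<Rightarrow> int \<Rightarrow> int" where
  "GA k t = (1 + 2^k*t)^35 * (2^k*t - 1)^21 * (2^(k-1)*t - 1)^84 * (2^k*t - 3)^90"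

lemma regA: "(a::int)^35 * (x*t)^15 * b^21 * (2*c)^84 * d^90 = x^15 * 2^84 * (t^15 * (a^35*b^21*c^84*d^90))"
  by (simp only: power_mult_distrib mult_ac)

lemma famA:
  assumes k: "k \<ge> 2"
  shows "Eint (1 + 2^k*t) 1 = 2^(15*k+84) * (t^15 * GA k t)"
    and "(2::int)^(k-1) dvd GA k t - (-(3^90))"
proof -
  obtain k' where k': "k = Suc k'" using k by (cases k) auto
  have h: "(2::int)^k * t = 2 * (2^(k-1) * t)" using k' by simp
  have f1: "1 + 2^k*t - 1 = (2::int)^k*t" by simp
  have f3: "1 + 2^k*t - 3*1 = (2::int) * (2^(k-1)*t - 1)" using h by simp
  have f2: "1 + 2^k*t - 2*1 = (2::int)^k*t - 1" by simp
  have f4: "1 + 2^k*t - 4*1 = (2::int)^k*t - 3" by simp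
  have "Eint (1 + 2^k*t) 1 = (1 + 2^k*t)^35 * (2^k*t)^15 * (2^k*t - 1)^21 * (2 * (2^(k-1)*t - 1))^84 * (2^k*t - 3)^90"
    unfolding Eint_def f1 f2 f3 f4 by simp
  also have "\<dots> = 2^(15*k) * 2^84 * (t^15 * GA k t)"
    unfolding GA_def mult.commute[of 15 k] power_mult by (rule regA)
  finally show "Eint (1 + 2^k*t) 1 = 2^(15*k+84) * (t^15 * GA k t)" by (simp add: power_add)
  let ?m = "(2::int)^(k-1)"
  have a: "?m dvd 2^k*t" using k' by simp
  have b: "?m dvd 2^(k-1)*t" by simp
  have "[GA k t = 1^35 * (-1)^21 * (-1)^84 * (-3)^90] (mod ?m)"
    unfolding GA_def
    apply (intro cong_mult cong_pow)
    using cong0[OF a, of 1] cong0[OF a, of "-1"] cong0[OF b, of "-1"] cong0[OF a, of "-3"]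
    by (simp_all only: add.commute diff_conv_add_uminus)
  then show "?m dvd GA k t - (-(3^90))" by (simp add: cong_iff_dvd_diff)
qed

definition GB :: "nat \<Rightarrow> int \<Rightarrow> int" where
  "GB l t = (1 + 2^(l-1)*t)^35 * (1 + 2^l*t)^15 * (2^l*t - 1)^84 * (2^(l-1)*t - 1)^90"

lemma regB: "((2::int)*a)^35 * b^15 * (x*t)^21 * c^84 * (2*d)^90 = x^21 * 2^125 * (t^21 * (a^35*b^15*c^84*d^90))"
  by (simp only: power_mult_distrib mult_ac power_add[symmetric] numeral_Bit1 numeral_Bit0) simp

lemma famB:
  assumes l: "l \<ge> 2"
  shows "Eint (2 + 2^l*t) 1 = 2^(21*l+125) * (t^21 * GB l t)"
    and "(2::int)^(l-1) dvd GB l t - 1"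
proof -
  obtain l' where l': "l = Suc l'" using l by (cases l) auto
  have h2: "(2::int)^l = 2 * 2^(l-1)" using l' by simp
  have f0: "2 + 2^l*t = (2::int) * (1 + 2^(l-1)*t)" by (simp add: h2 algebra_simps)
  have f1: "2 * (1 + 2^(l-1)*t) - 1 = (1::int) + 2^l*t" by (simp add: h2 algebra_simps)
  have f2: "2 * (1 + 2^(l-1)*t) - 2*1 = (2::int)^l*t" by (simp add: h2 algebra_simps)
  have f3: "2 * (1 + 2^(l-1)*t) - 3*1 = (2::int)^l*t - 1" by (simp add: h2 algebra_simps)
  have f4: "2 * (1 + 2^(l-1)*t) - 4*1 = (2::int) * (2^(l-1)*t - 1)" by (simp add: h2 algebra_simps)
  have "Eint (2 + 2^l*t) 1 = (2 * (1 + 2^(l-1)*t))^35 * (1 + 2^l*t)^15 * (2^l*t)^21 * (2^l*t - 1)^84 * (2 * (2^(l-1)*t - 1))^90"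
    unfolding Eint_def f0 f1 f2 f3 f4 by simp
  also have "\<dots> = 2^(l*21) * 2^125 * (t^21 * GB l t)"
    unfolding GB_def power_mult by (rule regB)
  finally show "Eint (2 + 2^l*t) 1 = 2^(21*l+125) * (t^21 * GB l t)" by (simp add: power_add mult.commute)
  let ?m = "(2::int)^(l-1)"
  have a: "?m dvd 2^l*t" using l' by simp
  have b: "?m dvd 2^(l-1)*t" by simp
  have "[GB l t = 1^35 * 1^15 * (-1)^84 * (-1)^90] (mod ?m)"
    unfolding GB_def
    apply (intro cong_mult cong_pow)
    using cong0[OF b, of 1] cong0[OF a, of 1] cong0[OF a, of "-1"] cong0[OF b, of "-1"]
    by (simp_all only: add.commute diff_conv_add_uminus)
  then show "?m dvd GB l t - 1" by (simp add: cong_iff_dvd_diff)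
qed

definition GC :: "nat \<Rightarrow> int" where
  "GC l = (3 + 2^l)^35 * (1 + 2^(l-1))^15 * (1 + 2^l)^21 * (2^l - 1)^90"

lemma regC: "(a::int)^35 * (2*b)^15 * c^21 * x^84 * d^90 = x^84 * 2^15 * (a^35*b^15*c^21*d^90)"
  by (simp only: power_mult_distrib mult_ac)

lemma famC:
  assumes l: "l \<ge> 2"
  shows "Eint (3 + 2^l) 1 = 2^(84*l+15) * GC l"
    and "(2::int)^(l-1) dvd GC l - 3^35"
proof -
  obtain l' where l': "l = Suc l'" using l by (cases l) auto
  have h: "(2::int)^l = 2 * 2^(l-1)" using l' by simp
  have f1: "3 + 2^l - 1 = (2::int) * (1 + 2^(l-1))" using h by simp
  have f2: "3 + 2^l - 2*1 = (1::int) + 2^l" by simp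
  have f3: "3 + 2^l - 3*1 = (2::int)^l" by simp
  have f4: "3 + 2^l - 4*1 = (2::int)^l - 1" by simp
  have "Eint (3 + 2^l) 1 = (3 + 2^l)^35 * (2 * (1 + 2^(l-1)))^15 * (1 + 2^l)^21 * (2^l)^84 * (2^l - 1)^90"
    unfolding Eint_def f1 f2 f3 f4 by simp
  also have "\<dots> = (2^l)^84 * 2^15 * GC l"
    unfolding GC_def by (rule regC)
  finally show "Eint (3 + 2^l) 1 = 2^(84*l+15) * GC l" by (simp add: power_add power_mult[symmetric] mult.commute)
  let ?m = "(2::int)^(l-1)"
  have a: "?m dvd 2^l" using l' by simp
  have b: "?m dvd 2^(l-1)" by simp
  have "[GC l = 3^35 * 1^15 * 1^21 * (-1)^90] (mod ?m)"
    unfolding GC_def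
    apply (intro cong_mult cong_pow)
    using cong0[OF a, of 3] cong0[OF b, of 1] cong0[OF a, of 1] cong0[OF a, of "-1"]
    by (simp_all only: add.commute diff_conv_add_uminus)
  then show "?m dvd GC l - 3^35" by (simp add: cong_iff_dvd_diff)
qed



lemma assemble:
  fixes X Y P Q Z Yo Po Qo :: int and E W al be N :: nat
  assumes X: "X = 2^E * Z" and Y: "Y = 2^W * Yo" and oY: "odd Yo"
    and P: "P = 2^al * Po" and Q: "Q = 2^be * Qo" and oQ: "odd Qo"
    and EW: "E + be = al + W" and dv: "(2::int)^N dvd Z * Qo - Po * Yo"
  shows "padic_abs 2 (of_int X / of_int Y - of_int P / of_int Q) \<le> 2 powr (- (real al - real be + real N))"
proof -
  have Y0: "Y \<noteq> 0" using oY Y by auto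
  have Q0: "Q \<noteq> 0" using oQ Q by auto
  have eq: "(of_int X / of_int Y - of_int P / of_int Q :: rat) = of_int (X*Q - P*Y) / of_int (Y*Q)"
    using Y0 Q0 by (simp add: field_simps)
  have "X*Q - P*Y = 2^E * 2^be * (Z * Qo) - 2^al * 2^W * (Po * Yo)"
    by (simp add: X Y P Q mult_ac)
  also have "\<dots> = 2^(E+be) * (Z*Qo - Po*Yo)"
    by (simp add: power_add[symmetric] EW algebra_simps)
  finally have XQ: "X*Q - P*Y = 2^(E+be) * (Z*Qo - Po*Yo)" .
  have d: "(int 2)^(E+be+N) dvd X*Q - P*Y"
    unfolding XQ power_add by (simp add: dv mult_dvd_mono)
  have YQ: "Y*Q = (int 2)^(W+be) * (Yo*Qo)" by (simp add: Y Q power_add mult_ac)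
  have mYQ: "multiplicity (int 2) (Y*Q) = W + be"
    by (rule multiplicity_decomposeI[OF YQ]) (use oY oQ in auto)
  have "padic_abs 2 (of_int (X*Q - P*Y) / of_int (Y*Q)) \<le> real 2 powr (- (real (E+be+N) - real (multiplicity (int 2) (Y*Q))))"
    by (rule abs_bound) (use Y0 Q0 d in auto)
  also have "real (E+be+N) - real (multiplicity (int 2) (Y*Q)) = real al - real be + real N"
    unfolding mYQ using EW by (simp add: algebra_simps)
  finally show ?thesis unfolding eq by simp
qed

lemma finish:
  fixes X Y P Q G Yo Po Qo t :: int and E W al be N N0 e :: nat and \<epsilon> :: real
  assumes X: "X = 2^E * (t^e * G)" and Y: "Y = 2^W * Yo" and oY: "odd Yo"
    and P: "P = 2^al * Po" and Q: "Q = 2^be * Qo" and oQ: "odd Qo"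
    and EW: "E + be = al + W" and dv: "(2::int)^N dvd t^e * G * Qo - Po * Yo"
    and NN: "int N0 \<le> int al - int be + int N" and eps: "2 powr (- real N0) < \<epsilon>"
  shows "padic_abs 2 (of_int X / of_int Y - of_int P / of_int Q) < \<epsilon>"
proof -
  have "padic_abs 2 (of_int X / of_int Y - of_int P / of_int Q) \<le> 2 powr (- (real al - real be + real N))"
    by (rule assemble[OF X Y oY P Q oQ EW]) (use dv in \<open>simp add: mult.assoc\<close>)
  also have "\<dots> \<le> 2 powr (- real N0)"
    using NN by (intro powr_mono) linarith+
  finally show ?thesis using eps by simp
qed

lemma odd_of_cong:
  fixes G G0 :: int
  assumes "(2::int)^(k-1) dvd G - G0" "k \<ge> 2" "odd G0"
  shows "odd G"
proof -
  have "(2::int) dvd 2^(k-1)" using assms(2) by (simp add: dvd_power)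
  then have "(2::int) dvd G - G0" using assms(1) dvd_trans by blast
  then show ?thesis using assms(3) by (metis dvd_add_right_iff diff_add_cancel)
qed

lemma pow_dvd_mono: "N \<le> k - 1 \<Longrightarrow> (2::int)^(k-1) dvd x \<Longrightarrow> (2::int)^N dvd x"
  using le_imp_power_dvd dvd_trans by blast



lemma eps_pow:
  fixes \<epsilon> :: real assumes "\<epsilon> > 0"
  obtains N0 :: nat where "2 powr (- real N0) < \<epsilon>"
proof -
  obtain n where n: "(1/2::real)^n < \<epsilon>" using real_arch_pow_inv[OF assms, of "1/2"] by auto
  have "2 powr (- real n) = (1/2::real)^n"
    by (simp add: powr_minus powr_realpow power_one_over inverse_eq_divide)
  then show ?thesis using that n by metis
qed

lemma oddA: "k \<ge> 2 \<Longrightarrow> odd (GA k t)"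
  using odd_of_cong[OF famA(2)] by simp

lemma oddB: "l \<ge> 2 \<Longrightarrow> odd (GB l t)"
  using odd_of_cong[OF famB(2)] by simp

lemma oddC: "l \<ge> 2 \<Longrightarrow> odd (GC l)"
  using odd_of_cong[OF famC(2)] by simp

theorem dense2:
  fixes a :: rat and \<epsilon> :: real
  assumes eps0: "\<epsilon> > 0"
  shows "\<exists>u v. Eint v 1 \<noteq> 0 \<and> padic_abs 2 (of_int (Eint u 1) / of_int (Eint v 1) - a) < \<epsilon>"
proof -
  obtain N0 :: nat where eps: "2 powr (- real N0) < \<epsilon>" using eps_pow[OF eps0] by blast
  have nu: "\<not> is_unit (2::int)" by simp
  show ?thesis
  proof (cases "a = 0")
    case True
    define k where "k = N0 + 2"
    have k2: "k \<ge> 2" by (simp add: k_def)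
    define X where "X = Eint (1 + 2^k*1) 1"
    define Y where "Y = Eint (1 + 2^2*1) 1"
    have X: "X = 2^(15*k+84) * (1^15 * GA k 1)" unfolding X_def by (rule famA(1)[OF k2])
    have Y: "Y = (int 2)^(15*2+84) * GA 2 1" unfolding Y_def using famA(1)[of 2 1] by simp
    have oY: "odd (GA 2 1)" by (rule oddA) simp
    have Y0: "Y \<noteq> 0" using Y oY by auto
    have mY: "multiplicity (int 2) Y = 15*2+84"
      by (rule multiplicity_decomposeI[OF Y]) (use oY in auto)
    have d: "(int 2)^(15*k+84) dvd X" using X by simp
    have "padic_abs 2 (of_int X / of_int Y) \<le> real 2 powr (- (real (15*k+84) - real (multiplicity (int 2) Y)))"
      by (rule abs_bound[OF _ Y0 d]) simp
    also have "real (15*k+84) - real (multiplicity (int 2) Y) = 15 * real N0" using mY k_def by simp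
    also have "real 2 powr (- (15 * real N0)) \<le> 2 powr (- real N0)" unfolding of_nat_numeral
      by (intro powr_mono) auto
    finally have "padic_abs 2 (of_int X / of_int Y) < \<epsilon>" using eps by simp
    then show ?thesis using True Y0 unfolding X_def Y_def by auto
  next
    case False
    obtain P Q where PQ: "quotient_of a = (P, Q)" by (cases "quotient_of a")
    have a: "a = of_int P / of_int Q" using quotient_of_div[OF PQ] .
    have Q0: "Q > 0" using quotient_of_denom_pos[OF PQ] .
    have P0: "P \<noteq> 0" using a False by auto
    obtain Po where Po: "P = 2 ^ multiplicity 2 P * Po" "\<not> 2 dvd Po"
      using multiplicity_decompose'[OF P0 nu] by blast
    obtain Qo where Qo: "Q = 2 ^ multiplicity 2 Q * Qo" "\<not> 2 dvd Qo"
      using multiplicity_decompose'[of Q 2] Q0 nu by auto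
    define al where "al = multiplicity 2 P"
    define be where "be = multiplicity 2 Q"
    have Po': "P = 2^al * Po" "odd Po" using Po by (auto simp: al_def)
    have Qo': "Q = 2^be * Qo" "odd Qo" using Qo by (auto simp: be_def)
    define m where "m = int al - int be"
    define N where "N = nat (int N0 - m) + 1"
    have NN: "int N0 \<le> int al - int be + int N" unfolding N_def m_def by linarith
    have N1: "N \<ge> 1" by (simp add: N_def)
    have cases3: "m mod 3 = 0 \<or> m mod 3 = 1 \<or> m mod 3 = 2" by presburger
    then show ?thesis
    proof (elim disjE)
      assume m1: "m mod 3 = 1"
      have "(3::int) dvd m + 41" using m1 by presburger
      then obtain j where j: "m + 41 = 3 * j" by (elim dvdE)
      define T where "T = \<bar>j\<bar> + int N + 2"
      define k where "k = nat (3*j + 7*T)"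
      define l where "l = nat (2*j + 5*T)"
      have ik: "int k = 3*j + 7*T" unfolding k_def T_def by simp
      have il: "int l = 2*j + 5*T" unfolding l_def T_def by simp
      have ja: "\<bar>j\<bar> \<ge> j" "\<bar>j\<bar> \<ge> -j" by auto
      have "int k \<ge> int N + 2" using ik ja unfolding T_def by (simp only: distrib_left; linarith)
      then have kN: "N \<le> k - 1" "k \<ge> 2" by linarith+
      have "int l \<ge> 2" using il ja unfolding T_def by (simp only: distrib_left; linarith)
      then have l2: "l \<ge> 2" by linarith
      have oY: "odd (GB l 1)" by (rule oddB[OF l2])
      obtain t where t: "odd t" "\<forall>G. (2::int)^N dvd G - (-(3^90)) \<longrightarrow> (2::int)^N dvd t^15 * G * Qo - Po * GB l 1"
        using unit_solve[of 15 "-(3^90)" Qo Po "GB l 1" N] Qo'(2) Po'(2) oY by auto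
      have X: "Eint (1 + 2^k*t) 1 = 2^(15*k+84) * (t^15 * GA k t)" by (rule famA(1)[OF kN(2)])
      have Y: "Eint (2 + 2^l*1) 1 = 2^(21*l+125) * GB l 1" using famB(1)[OF l2, of 1] by simp
      have dv: "(2::int)^N dvd t^15 * GA k t * Qo - Po * GB l 1"
        using t(2) pow_dvd_mono[OF kN(1) famA(2)[OF kN(2)]] by blast
      have EW: "15*k+84 + be = al + (21*l+125)"
      proof -
        have "int (15*k+84 + be) = int (al + (21*l+125))" using ik il j unfolding m_def by simp
        then show ?thesis by (simp only: of_nat_eq_iff)
      qed
      have "padic_abs 2 (of_int (Eint (1 + 2^k*t) 1) / of_int (Eint (2 + 2^l*1) 1) - of_int P / of_int Q) < \<epsilon>"
        by (rule finish[OF X Y oY Po'(1) Qo'(1) Qo'(2) EW dv NN eps])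
      moreover have "Eint (2 + 2^l*1) 1 \<noteq> 0" using Y oY by auto
      ultimately show ?thesis unfolding a by blast
    next
      assume m2: "m mod 3 = 2"
      have "(3::int) dvd m - 41" using m2 by presburger
      then obtain j where j: "m - 41 = 3 * j" by (elim dvdE)
      define T where "T = \<bar>j\<bar> + int N + 2"
      define l where "l = nat (3*j + 5*T)"
      define k where "k = nat (4*j + 7*T)"
      have ik: "int k = 4*j + 7*T" unfolding k_def T_def by simp
      have il: "int l = 3*j + 5*T" unfolding l_def T_def by simp
      have ja: "\<bar>j\<bar> \<ge> j" "\<bar>j\<bar> \<ge> -j" by auto
      have "int l \<ge> int N + 2" using il ja unfolding T_def by (simp only: distrib_left; linarith)
      then have lN: "N \<le> l - 1" "l \<ge> 2" by linarith+
      have "int k \<ge> 2" using ik ja unfolding T_def by (simp only: distrib_left; linarith)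
      then have k2: "k \<ge> 2" by linarith
      have oY: "odd (GA k 1)" by (rule oddA[OF k2])
      obtain t where t: "odd t" "\<forall>G. (2::int)^N dvd G - 1 \<longrightarrow> (2::int)^N dvd t^21 * G * Qo - Po * GA k 1"
        using unit_solve[of 21 1 Qo Po "GA k 1" N] Qo'(2) Po'(2) oY by auto
      have X: "Eint (2 + 2^l*t) 1 = 2^(21*l+125) * (t^21 * GB l t)" by (rule famB(1)[OF lN(2)])
      have Y: "Eint (1 + 2^k*1) 1 = 2^(15*k+84) * GA k 1" using famA(1)[OF k2, of 1] by simp
      have dv: "(2::int)^N dvd t^21 * GB l t * Qo - Po * GA k 1"
        using t(2) pow_dvd_mono[OF lN(1) famB(2)[OF lN(2)]] by blast
      have EW: "21*l+125 + be = al + (15*k+84)"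
      proof -
        have "int (21*l+125 + be) = int (al + (15*k+84))" using ik il j unfolding m_def by simp
        then show ?thesis by (simp only: of_nat_eq_iff)
      qed
      have "padic_abs 2 (of_int (Eint (2 + 2^l*t) 1) / of_int (Eint (1 + 2^k*1) 1) - of_int P / of_int Q) < \<epsilon>"
        by (rule finish[OF X Y oY Po'(1) Qo'(1) Qo'(2) EW dv NN eps])
      moreover have "Eint (1 + 2^k*1) 1 \<noteq> 0" using Y oY by auto
      ultimately show ?thesis unfolding a by blast
    next
      assume m0: "m mod 3 = 0"
      have "(3::int) dvd m - 69" using m0 by presburger
      then obtain j where j: "m - 69 = 3 * j" by (elim dvdE)
      define T where "T = \<bar>j\<bar> + int N + 2"
      define k where "k = nat (-11*j + 28*T)"
      define l where "l = nat (-2*j + 5*T)"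
      have ik: "int k = -11*j + 28*T" unfolding k_def T_def by simp
      have il: "int l = -2*j + 5*T" unfolding l_def T_def by simp
      have ja: "\<bar>j\<bar> \<ge> j" "\<bar>j\<bar> \<ge> -j" by auto
      have "int k \<ge> int N + 2" using ik ja unfolding T_def by (simp only: distrib_left; linarith)
      then have kN: "N \<le> k - 1" "k \<ge> 2" by linarith+
      have "int l \<ge> 2" using il ja unfolding T_def by (simp only: distrib_left; linarith)
      then have l2: "l \<ge> 2" by linarith
      have oY: "odd (GC l)" by (rule oddC[OF l2])
      obtain t where t: "odd t" "\<forall>G. (2::int)^N dvd G - (-(3^90)) \<longrightarrow> (2::int)^N dvd t^15 * G * Qo - Po * GC l"
        using unit_solve[of 15 "-(3^90)" Qo Po "GC l" N] Qo'(2) Po'(2) oY by auto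
      have X: "Eint (1 + 2^k*t) 1 = 2^(15*k+84) * (t^15 * GA k t)" by (rule famA(1)[OF kN(2)])
      have Y: "Eint (3 + 2^l) 1 = 2^(84*l+15) * GC l" by (rule famC(1)[OF l2])
      have dv: "(2::int)^N dvd t^15 * GA k t * Qo - Po * GC l"
        using t(2) pow_dvd_mono[OF kN(1) famA(2)[OF kN(2)]] by blast
      have EW: "15*k+84 + be = al + (84*l+15)"
      proof -
        have "int (15*k+84 + be) = int (al + (84*l+15))" using ik il j unfolding m_def by simp
        then show ?thesis by (simp only: of_nat_eq_iff)
      qed
      have "padic_abs 2 (of_int (Eint (1 + 2^k*t) 1) / of_int (Eint (3 + 2^l) 1) - of_int P / of_int Q) < \<epsilon>"
        by (rule finish[OF X Y oY Po'(1) Qo'(1) Qo'(2) EW dv NN eps])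
      moreover have "Eint (3 + 2^l) 1 \<noteq> 0" using Y oY by auto
      ultimately show ?thesis unfolding a by blast
    qed
  qed
qed

lemma vb_add: "vars_below n F \<Longrightarrow> vars_below n G \<Longrightarrow> vars_below n (F + G)"
  unfolding vars_below_def using keys_add[of F G] by blast

lemma vb_uminus: "vars_below n F \<Longrightarrow> vars_below n (- F)"
  unfolding vars_below_def by simp

lemma vb_diff: "vars_below n F \<Longrightarrow> vars_below n G \<Longrightarrow> vars_below n (F - G)"
  using vb_add[of n F "- G"] vb_uminus[of n G] by simp

lemma vb_mult: "vars_below n F \<Longrightarrow> vars_below n G \<Longrightarrow> vars_below n (F * G)"
proof -
  assume F: "vars_below n F" and G: "vars_below n G"
  show ?thesis unfolding vars_below_def
  proof
    fix m assume "m \<in> Poly_Mapping.keys (F * G)"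
    then obtain a b where ab: "m = a + b" "a \<in> Poly_Mapping.keys F" "b \<in> Poly_Mapping.keys G"
      using keys_mult[of F G] by blast
    have "Poly_Mapping.keys m \<subseteq> Poly_Mapping.keys a \<union> Poly_Mapping.keys b"
      unfolding ab(1) by (rule keys_add)
    then show "Poly_Mapping.keys m \<subseteq> {..<n}" using F G ab unfolding vars_below_def by blast
  qed
qed

lemma vb_one: "vars_below n 1"
  unfolding vars_below_def by (simp flip: single_one)

lemma vb_power: "vars_below n F \<Longrightarrow> vars_below n (F ^ k)"
  by (induction k) (auto simp: vb_one vb_mult)

lemma vb_numeral: "vars_below n (numeral k)"
  unfolding vars_below_def by (simp flip: single_numeral)

lemma vb_Xv: "i < n \<Longrightarrow> vars_below n (Xv i)"
  unfolding vars_below_def Xv_def by simp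

definition tdm_hom :: "nat \<Rightarrow> int_mpoly \<Rightarrow> bool" where
  "tdm_hom d F \<longleftrightarrow> (\<forall>m\<in>Poly_Mapping.keys F. total_degree_mon m = d)"

lemma tdm_superset:
  assumes "finite S" "Poly_Mapping.keys m \<subseteq> S"
  shows "total_degree_mon m = (\<Sum>i\<in>S. Poly_Mapping.lookup m i)"
  unfolding total_degree_mon_def
  by (rule sum.mono_neutral_left) (use assms in \<open>auto simp: in_keys_iff\<close>)

lemma tdm_add: "total_degree_mon (a + b) = total_degree_mon a + total_degree_mon b"
proof -
  let ?S = "Poly_Mapping.keys a \<union> Poly_Mapping.keys b"
  have f: "finite ?S" by simp
  show ?thesis
    apply (subst (1 2 3) tdm_superset[OF f])
    using keys_add[of a b] by (auto simp: lookup_add sum.distrib)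
qed

lemma hom_add: "tdm_hom d F \<Longrightarrow> tdm_hom d G \<Longrightarrow> tdm_hom d (F + G)"
  unfolding tdm_hom_def using keys_add[of F G] by blast

lemma hom_uminus: "tdm_hom d F \<Longrightarrow> tdm_hom d (- F)"
  unfolding tdm_hom_def by simp

lemma hom_diff: "tdm_hom d F \<Longrightarrow> tdm_hom d G \<Longrightarrow> tdm_hom d (F - G)"
  using hom_add[of d F "- G"] hom_uminus[of d G] by simp

lemma hom_mult: "tdm_hom d1 F \<Longrightarrow> tdm_hom d2 G \<Longrightarrow> tdm_hom (d1 + d2) (F * G)"
proof -
  assume F: "tdm_hom d1 F" and G: "tdm_hom d2 G"
  show ?thesis unfolding tdm_hom_def
  proof
    fix m assume "m \<in> Poly_Mapping.keys (F * G)"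
    then obtain a b where ab: "m = a + b" "a \<in> Poly_Mapping.keys F" "b \<in> Poly_Mapping.keys G"
      using keys_mult[of F G] by blast
    then show "total_degree_mon m = d1 + d2" using F G unfolding tdm_hom_def by (simp add: tdm_add)
  qed
qed

lemma hom_one: "tdm_hom 0 1"
  unfolding tdm_hom_def by (simp add: total_degree_mon_def flip: single_one)

lemma hom_power: "tdm_hom d F \<Longrightarrow> tdm_hom (k * d) (F ^ k)"
proof (induction k)
  case 0 then show ?case by (simp add: hom_one)
next
  case (Suc k)
  then have "tdm_hom (d + k * d) (F * F ^ k)" by (intro hom_mult) auto
  then show ?case by simp
qed

lemma hom_numeral: "tdm_hom 0 (numeral k)"
  unfolding tdm_hom_def by (simp add: total_degree_mon_def flip: single_numeral)

lemma hom_Xv: "tdm_hom 1 (Xv i)"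
  unfolding tdm_hom_def Xv_def by (simp add: total_degree_mon_def)

lemma hom_form: "tdm_hom d F \<Longrightarrow> is_form F"
  unfolding tdm_hom_def is_form_def by blast

definition Fpoly :: int_mpoly where
  "Fpoly = Xv 0 ^ 35 * (Xv 0 - Xv 1) ^ 15 * (Xv 0 - 2 * Xv 1) ^ 21 * (Xv 0 - 3 * Xv 1) ^ 84
     * (Xv 0 - 4 * Xv 1) ^ 90 * Xv 1 ^ 70"

definition fpoly :: int_mpoly where
  "fpoly = Xv 0 ^ 35 * (Xv 0 - 1) ^ 15 * (Xv 0 - 2) ^ 21 * (Xv 0 - 3) ^ 84 * (Xv 0 - 4) ^ 90"

lemma eval_Fpoly: "mpoly_eval Fpoly x = Eint (x 0) (x 1)"
  unfolding Fpoly_def Eint_def by (simp add: eval_simps)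

lemma eval_fpoly: "mpoly_eval fpoly x = Eint (x 0) 1"
  unfolding fpoly_def Eint_def by (simp add: eval_simps)

lemma vb_Fpoly: "n \<ge> 2 \<Longrightarrow> vars_below n Fpoly"
  unfolding Fpoly_def
  by (intro vb_mult vb_power vb_diff vb_Xv vb_numeral) auto

lemma vb_fpoly: "n \<ge> 1 \<Longrightarrow> vars_below n fpoly"
  unfolding fpoly_def
  by (intro vb_mult vb_power vb_diff vb_Xv vb_numeral vb_one) auto

lemma form_Fpoly: "is_form Fpoly"
proof -
  have l: "tdm_hom 1 (Xv 0 - c * Xv 1)" if "tdm_hom 0 c" for c
  proof -
    have "tdm_hom (0 + 1) (c * Xv 1)" by (rule hom_mult[OF that hom_Xv])
    then have "tdm_hom 1 (c * Xv 1)" by simp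
    then show ?thesis by (rule hom_diff[OF hom_Xv])
  qed
  have "tdm_hom (35 * 1 + 15 * 1 + 21 * 1 + 84 * 1 + 90 * 1 + 70 * 1) Fpoly"
    unfolding Fpoly_def
    using hom_power[OF hom_Xv] hom_power[OF l[OF hom_numeral]]
      hom_power[OF hom_diff[OF hom_Xv hom_Xv]]
    by (intro hom_mult) auto
  then show ?thesis by (rule hom_form)
qed

lemma dense_from_points:
  assumes pts: "\<And>u. \<exists>x\<in>int_points n. mpoly_eval F x = Eint u 1"
  shows "padic_dense 2 (ratio_set n F)"
  unfolding padic_dense_def
proof (intro allI impI)
  fix a :: rat and \<epsilon> :: real assume "\<epsilon> > 0"
  then obtain u v where uv: "Eint v 1 \<noteq> 0" "padic_abs 2 (of_int (Eint u 1) / of_int (Eint v 1) - a) < \<epsilon>"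
    using dense2 by blast
  obtain x where x: "x \<in> int_points n" "mpoly_eval F x = Eint u 1" using pts by blast
  obtain y where y: "y \<in> int_points n" "mpoly_eval F y = Eint v 1" using pts by blast
  have "of_int (Eint u 1) / of_int (Eint v 1) \<in> ratio_set n F"
    unfolding ratio_set_def mem_Collect_eq
    by (rule exI[of _ x], rule exI[of _ y]) (simp add: x y uv(1))
  then show "\<exists>s\<in>ratio_set n F. padic_abs 2 (s - a) < \<epsilon>" using uv(2) by blast
qed

lemma not_dense_from_form:
  assumes vals: "\<And>x. \<exists>u w. mpoly_eval F x = Eint u w"
    and q: "prime q" "q > 4"
  shows "\<not> padic_dense q (ratio_set n F)"
proof
  assume "padic_dense q (ratio_set n F)"
  moreover have "1 / real q > 0" using q by simp
  ultimately obtain s where s: "s \<in> ratio_set n F" "padic_abs q (s - of_int (int q)) < 1 / real q"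
    unfolding padic_dense_def by blast
  then obtain x y where xy: "s = of_int (mpoly_eval F x) / of_int (mpoly_eval F y)" "mpoly_eval F y \<noteq> 0"
    unfolding ratio_set_def by blast
  obtain u w where uw: "mpoly_eval F x = Eint u w" using vals by blast
  obtain u' w' where uw': "mpoly_eval F y = Eint u' w'" using vals by blast
  have nv: "\<not> (mpoly_eval F x \<noteq> 0 \<and> multiplicity (int q) (mpoly_eval F x) = multiplicity (int q) (mpoly_eval F y) + 1)"
  proof
    assume h: "mpoly_eval F x \<noteq> 0 \<and> multiplicity (int q) (mpoly_eval F x) = multiplicity (int q) (mpoly_eval F y) + 1"
    have ex: "Eint u w \<noteq> 0" using h uw by simp
    have ey: "Eint u' w' \<noteq> 0" using xy(2) uw' by simp
    have g1: "good (multiplicity (int q) (Eint u w))" by (rule qgood[OF q ex])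
    have g2: "good (multiplicity (int q) (Eint u' w'))" by (rule qgood[OF q ey])
    have "multiplicity (int q) (Eint u w) = multiplicity (int q) (Eint u' w') + 1"
      using h uw uw' by simp
    then show False using good_not_succ[OF g1 g2] by blast
  qed
  show False using qdistinct[OF q(1) xy(2) nv] s(2) xy(1) by simp
qed

theorem theorem1p7:
  fixes n :: nat
  assumes "n \<ge> 1"
  shows "\<exists>(F::int_mpoly) (p::nat) (M::real).
           vars_below n F \<and> (n \<ge> 2 \<longrightarrow> is_form F) \<and> prime p \<and> M > 0 \<and>
           padic_dense p (ratio_set n F) \<and>
           (\<forall>q::nat. prime q \<and> real q > M \<longrightarrow> \<not> padic_dense q (ratio_set n F))"
proof (cases "n \<ge> 2")
  case True
  have pts: "\<exists>x\<in>int_points n. mpoly_eval Fpoly x = Eint u 1" for u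
  proof
    let ?x = "\<lambda>i::nat. if i = 0 then u else if i = 1 then 1 else 0"
    show "?x \<in> int_points n" using True by (auto simp: int_points_def)
    show "mpoly_eval Fpoly ?x = Eint u 1" by (simp add: eval_Fpoly)
  qed
  have nd: "\<not> padic_dense q (ratio_set n Fpoly)" if "prime q" "real q > 4" for q
    using not_dense_from_form[of Fpoly q n] that eval_Fpoly by auto
  show ?thesis
    by (rule exI[of _ Fpoly], rule exI[of _ 2], rule exI[of _ 4])
       (use True vb_Fpoly form_Fpoly dense_from_points[OF pts] nd in auto)
next
  case False
  have pts: "\<exists>x\<in>int_points n. mpoly_eval fpoly x = Eint u 1" for u
  proof
    let ?x = "\<lambda>i::nat. if i = 0 then u else 0"
    show "?x \<in> int_points n" using assms by (auto simp: int_points_def)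
    show "mpoly_eval fpoly ?x = Eint u 1" by (simp add: eval_fpoly)
  qed
  have nd: "\<not> padic_dense q (ratio_set n fpoly)" if "prime q" "real q > 4" for q
    using not_dense_from_form[of fpoly q n] that eval_fpoly by auto
  show ?thesis
    by (rule exI[of _ fpoly], rule exI[of _ 2], rule exI[of _ 4])
       (use False assms vb_fpoly dense_from_points[OF pts] nd in auto)
qed

end
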